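(* Let $q$ be a power of the prime $p$ and $n$ a positive integer. Let $h\in \mathbb{F}_q[x]$ and $f, k\in\mathbb{F}_{q^n}[x]$ with $k(\mathbb{F}_q)\subseteq \mathbb{F}_q^*$, and let $P(x)=f(\mathrm{Tr}_{q^n/q}(x))+k(\mathrm{Tr}_{q^n/q}(x))\cdot L_h(x)$. Then $P$ is a permutation polynomial of $\mathbb{F}_{q^n}$ if and only if: (1) $\gcd\left(h(x), \frac{x^n-1}{x-1}\right)=1$; and (2) $Q(x):=T_n[f](x)+k(x)\cdot h(1)\cdot x$ induces a permutation of $\mathbb{F}_q$. Moreover, in this case, if $R\in\mathbb{F}_q[x]$ induces the inverse permutation of $Q$ on $\mathbb{F}_q$, then the inverse of the permutation of $\mathbb{F}_{q^n}$ induced by $P$ is induced by $$P_0(x)=F(\mathrm{Tr}_{q^n/q}(x))+k(R(\mathrm{Tr}_{q^n/q}(x)))^{q-2}\cdot L_H(x),$$ where $H\in \mathbb{F}_q[x]$ and $F\in \mathbb{F}_{q^n}[x]$ are as follows: (i) if $p\mid n$: $H$ is the unique polynomial of degree at most $n-1$ with $h(x)H(x)\equiv 1\pmod{x^n-1}$ (such $H$ exists, since when $p\mid n$ condition (1) is equivalent to $\gcd(h(x),x^n-1)=1$), and $F$ is any polynomial with $F(x)\equiv -k(R(x))^{q-2}\cdot L_H(f(R(x)))\pmod{x^q-x}$; (ii) if $p\nmid n$: $H$ is the unique polynomial of degree at most $n-2$ with $h(x)H(x)\equiv 1\pmod{\frac{x^n-1}{x-1}}$, and $F$ is any polynomial with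 $F(x)\equiv M(R(x))\pmod{x^q-x}$, where $M(x)=-k(x)^{q-2}\cdot L_H(f(x))+x\cdot\frac{1-h(1)H(1)}{n}$.
   Context: For $u(x)=\sum_{i=0}^m a_i x^i\in\mathbb{F}_q[x]$, its linearized $q$-associate is $L_u(x)=\sum_{i=0}^m a_i x^{q^i}$. $\mathrm{Tr}_{q^n/q}(x)=x+x^q+\cdots+x^{q^{n-1}}$ is the trace polynomial. For $f(x)=\sum_{i=0}^d a_i x^i\in\mathbb{F}_{q^n}[x]$, define $T_n[f](x)=\sum_{i=0}^d \mathrm{Tr}_{q^n/q}(a_i)x^i\in\mathbb{F}_q[x]$. A permutation polynomial of a finite field is a polynomial inducing a bijection of it. *)

theory Defs
  imports "HOL-Computational_Algebra.Computational_Algebra"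
begin

definition Fq :: "nat \<Rightarrow> 'a::field set" where
  "Fq q = {x. x ^ q = x}"

definition coeffs_in :: "'a::zero set \<Rightarrow> 'a poly \<Rightarrow> bool" where
  "coeffs_in S u \<longleftrightarrow> (\<forall>i. coeff u i \<in> S)"

definition trace :: "nat \<Rightarrow> nat \<Rightarrow> 'a::field \<Rightarrow> 'a" where
  "trace q n x = (\<Sum>i<n. x ^ (q ^ i))"

definition trace_poly :: "nat \<Rightarrow> nat \<Rightarrow> 'a::field poly" where
  "trace_poly q n = (\<Sum>i<n. monom 1 (q ^ i))"

definition lin_assoc :: "nat \<Rightarrow> 'a::field poly \<Rightarrow> 'a poly" where
  "lin_assoc q u = (\<Sum>i\<le>degree u. monom (coeff u i) (q ^ i))"

definition Tn :: "nat \<Rightarrow> nat \<Rightarrow> 'a::field poly \<Rightarrow> 'a poly" where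
  "Tn q n f = (\<Sum>i\<le>degree f. monom (trace q n (coeff f i)) i)"

end

theory Submission
  imports Defs
begin

locale fqs =
  fixes p q n m :: nat and TY :: "'a::{field,finite} itself"
  assumes p: "prime p" and m: "m > 0" and q: "q = p^m" and n: "n > 0"
    and card: "card (UNIV::'a set) = q^n"
begin

lemma card_times_zero: "of_nat (card (UNIV::'a set)) * (x::'a) = 0"
proof -
  have "(\<Sum>y\<in>UNIV. x + y) = (\<Sum>y\<in>(UNIV::'a set). y)"
    by (rule sum.reindex_bij_witness[of _ "\<lambda>y. y - x" "\<lambda>y. x + y"]) auto
  then show ?thesis by (simp add: sum.distrib)
qed

lemma ofp: "of_nat p = (0::'a)"
proof -
  have "of_nat (card (UNIV::'a set)) = (0::'a)" using card_times_zero[of 1] by simp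
  hence "(of_nat p :: 'a) ^ (m*n) = 0" by (simp add: card q power_mult of_nat_power)
  thus ?thesis by simp
qed

lemma CHARp: "CHAR('a) = p"
proof -
  have "CHAR('a) dvd p" using ofp of_nat_eq_0_iff_char_dvd by blast
  moreover have "prime CHAR('a)"
    using prime_CHAR_semidom finite_imp_CHAR_pos[of] by (metis finite_UNIV)
  ultimately show ?thesis using p by (metis primes_dvd_imp_eq)
qed

lemma q2: "q \<ge> 2"
proof -
  have "p \<ge> 2" using p prime_ge_2_nat by blast
  moreover have "p^1 \<le> p^m" using m \<open>p \<ge> 2\<close> by (intro power_increasing) auto
  ultimately show ?thesis using q by simp
qed

lemma ofnat_zero_iff: "of_nat k = (0::'a) \<longleftrightarrow> p dvd k"
  using of_nat_eq_0_iff_char_dvd CHARp by metis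

lemma frob_add: "((x::'a) + y) ^ (q^i) = x^(q^i) + y^(q^i)"
  by (rule freshmans_dream'[where n="m*i"]) (auto simp: CHARp p q power_mult)

lemma frob_sum: "(sum (f::'b\<Rightarrow>'a) A) ^ (q^i) = (\<Sum>j\<in>A. f j ^ (q^i))"
  by (rule freshmans_dream_sum'[where n="m*i"]) (auto simp: CHARp p q power_mult)

lemma frob_neg: "(-(x::'a)) ^ (q^i) = - (x^(q^i))"
proof -
  have "0 = (x + -x) ^ (q^i)" using q2 by simp
  also have "\<dots> = x^(q^i) + (-x)^(q^i)" by (rule frob_add)
  finally show ?thesis by (simp add: eq_neg_iff_add_eq_0 add.commute)
qed

lemma frob_diff: "((x::'a) - y) ^ (q^i) = x^(q^i) - y^(q^i)"
  using frob_add[of x "-y" i] frob_neg[of y i] by simp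

lemma pow_card: "(x::'a) ^ (q^n) = x"
proof (cases "x = 0")
  case False
  have "x * (\<Prod>y\<in>UNIV-{0}. x * y) = x * x ^ (card (UNIV :: 'a set) - 1) * \<Prod>(UNIV-{0})"
    by (simp add: prod.distrib mult_ac)
  also have "x * x ^ (card (UNIV :: 'a set) - 1) = x ^ Suc (card (UNIV :: 'a set) - 1)"
    by (subst power_Suc) auto
  also have "Suc (card (UNIV :: 'a set) - 1) = card (UNIV :: 'a set)"
    using finite_UNIV_card_ge_0[where ?'a = 'a] by simp
  also have "(\<Prod>y\<in>UNIV-{0}. x * y) = (\<Prod>y\<in>UNIV-{0}. y)"
    by (rule prod.reindex_bij_witness[of _ "\<lambda>y. y / x" "\<lambda>y. x * y"]) (use False in auto)
  finally have eq: "x * \<Prod>(UNIV-{0}) = x ^ card (UNIV :: 'a set) * \<Prod>(UNIV-{0::'a})" .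
  have "\<Prod>(UNIV-{0::'a}) \<noteq> 0" by (subst prod_zero_iff) auto
  hence "x * x ^ card (UNIV :: 'a set) = x * x" using eq by (metis mult_right_cancel)
  hence "x ^ card (UNIV :: 'a set) = x" using False by (metis mult_left_cancel)
  thus ?thesis by (simp only: card)
qed (use q2 n in auto)

lemma Fq_pow: "c \<in> Fq q \<Longrightarrow> (c::'a) ^ (q^i) = c"
proof (induction i)
  case (Suc i)
  have "c ^ (q ^ Suc i) = (c ^ (q ^ i)) ^ q" by (simp only: power_Suc2 power_mult)
  also have "\<dots> = c" using Suc by (simp add: Fq_def)
  finally show ?case .
qed simp

lemma Fq_pow1: "c \<in> Fq q \<Longrightarrow> (c::'a) ^ q = c" by (simp add: Fq_def)

lemma Fq_add: "a \<in> Fq q \<Longrightarrow> b \<in> Fq q \<Longrightarrow> (a::'a) + b \<in> Fq q"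
  using frob_add[of a b 1] by (simp add: Fq_def)
lemma Fq_mult: "a \<in> Fq q \<Longrightarrow> b \<in> Fq q \<Longrightarrow> (a::'a) * b \<in> Fq q"
  by (simp add: Fq_def power_mult_distrib)
lemma Fq_neg: "a \<in> Fq q \<Longrightarrow> -(a::'a) \<in> Fq q"
  using frob_neg[of a 1] by (simp add: Fq_def)
lemma Fq_diff: "a \<in> Fq q \<Longrightarrow> b \<in> Fq q \<Longrightarrow> (a::'a) - b \<in> Fq q"
  using frob_diff[of a b 1] by (simp add: Fq_def)
lemma Fq_0: "(0::'a) \<in> Fq q" using q2 by (simp add: Fq_def)
lemma Fq_1: "(1::'a) \<in> Fq q" by (simp add: Fq_def)
lemma Fq_inv: "a \<in> Fq q \<Longrightarrow> inverse (a::'a) \<in> Fq q"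
  by (simp add: Fq_def power_inverse)
lemma Fq_div: "a \<in> Fq q \<Longrightarrow> b \<in> Fq q \<Longrightarrow> (a::'a) / b \<in> Fq q"
  by (simp add: Fq_def power_divide)
lemma Fq_pow2: "a \<in> Fq q \<Longrightarrow> (a::'a) ^ k \<in> Fq q"
proof -
  assume "a \<in> Fq q"
  hence "a ^ q = a" by (simp add: Fq_def)
  have "(a ^ k) ^ q = (a ^ q) ^ k" by (simp only: power_mult[symmetric] mult.commute)
  thus ?thesis using \<open>a ^ q = a\<close> by (simp add: Fq_def)
qed
lemma Fq_of_nat: "(of_nat k::'a) \<in> Fq q"
proof (induction k)
  case (Suc k)
  then show ?case using Fq_add[OF Fq_1 Suc] by simp
qed (simp add: Fq_0)
lemma Fq_sum: "(\<And>i. i \<in> A \<Longrightarrow> f i \<in> Fq q) \<Longrightarrow> sum (f::'b \<Rightarrow> 'a) A \<in> Fq q"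
proof (induction A rule: infinite_finite_induct)
  case (insert x F)
  then show ?case using Fq_add[of "f x" "sum f F"] by simp
qed (simp_all add: Fq_0)

end

definition Lev :: "nat \<Rightarrow> 'a::field poly \<Rightarrow> 'a \<Rightarrow> 'a" where
  "Lev q u x = (\<Sum>i\<le>degree u. coeff u i * x ^ (q ^ i))"

definition frobp :: "nat \<Rightarrow> 'a::field poly \<Rightarrow> 'a poly" where
  "frobp q u = map_poly (\<lambda>c. c ^ q) u"

definition phi :: "nat \<Rightarrow> 'a::field poly" where
  "phi n = (\<Sum>i<n. monom 1 i)"

lemma poly_lin_assoc: "poly (lin_assoc q u) x = Lev q u x"
  by (simp add: lin_assoc_def Lev_def poly_sum poly_monom)

lemma Lev_bound: "degree u \<le> K \<Longrightarrow> Lev q u x = (\<Sum>i\<le>K. coeff u i * x ^ (q ^ i))"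
  unfolding Lev_def by (rule sum.mono_neutral_left) (auto simp: coeff_eq_0)

lemma Lev_add: "Lev q (u + v) x = Lev q u x + Lev q v x"
proof -
  let ?K = "max (degree u) (degree v)"
  have "degree (u + v) \<le> ?K" by (rule degree_add_le) auto
  thus ?thesis by (simp add: Lev_bound[of _ ?K] sum.distrib distrib_right)
qed

lemma Lev_smult: "Lev q (smult c u) x = c * Lev q u x"
  by (simp add: Lev_bound[of "smult c u" "degree u"] Lev_def sum_distrib_left mult.assoc)

lemma Lev_minus: "Lev q (- u) x = - Lev q u x"
  using Lev_smult[of q "-1" u x] by simp

lemma Lev_diff: "Lev q (u - v) x = Lev q u x - Lev q v x"
  using Lev_add[of q u "-v" x] Lev_minus[of q v x] by simp

lemma Lev_0 [simp]: "Lev q 0 x = 0" by (simp add: Lev_def)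

lemma Lev_monom: "Lev q (monom c k) x = c * x ^ (q ^ k)"
proof -
  have "Lev q (monom c k) x = (\<Sum>i\<le>k. coeff (monom c k) i * x ^ (q ^ i))"
    by (rule Lev_bound) (rule degree_monom_le)
  also have "\<dots> = (\<Sum>i\<le>k. if i = k then c * x ^ (q ^ k) else 0)" by (rule sum.cong) auto
  also have "\<dots> = c * x ^ (q ^ k)" by simp
  finally show ?thesis .
qed

lemma Lev_sum: "Lev q (\<Sum>i\<in>A. f i) x = (\<Sum>i\<in>A. Lev q (f i) x)"
  by (induction A rule: infinite_finite_induct) (simp_all add: Lev_add)

lemma coeff_phi: "coeff (phi n) i = (if i < n then 1 else 0)"
  by (simp add: phi_def coeff_sum)

lemma xn1_eq: "(monom 1 n - 1 :: 'a::field poly) = [:-1, 1:] * phi n"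
proof (induction n)
  case 0 then show ?case by (simp add: phi_def)
next
  case (Suc n)
  have "phi (Suc n) = phi n + (monom 1 n :: 'a poly)" by (simp add: phi_def)
  hence "[:-1, 1:] * phi (Suc n) = (monom 1 n - 1) + [:-1, 1:] * (monom 1 n :: 'a poly)"
    using Suc by (simp add: distrib_left)
  also have "[:-1, 1:] * (monom 1 n :: 'a poly) = monom 1 (Suc n) - monom 1 n"
    by (simp add: monom_Suc)
  finally show ?case by simp
qed

lemma phi_div: "((monom 1 n - 1) div [:-1, 1:] :: 'a::field poly) = phi n"
proof -
  have "[:-1,1:] \<noteq> (0::'a poly)" by simp
  thus ?thesis unfolding xn1_eq by (rule nonzero_mult_div_cancel_left)
qed

lemma phi_nz: "n > 0 \<Longrightarrow> phi n \<noteq> 0"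
  by (metis coeff_phi one_neq_zero coeff_0)

lemma degree_phi: "n > 0 \<Longrightarrow> degree (phi n) = n - 1"
proof -
  assume "n > 0"
  have "degree (phi n) \<le> n - 1" by (rule degree_le) (auto simp: coeff_phi)
  moreover have "coeff (phi n) (n - 1) \<noteq> 0" using \<open>n > 0\<close> by (simp add: coeff_phi)
  ultimately show ?thesis using le_degree by (metis le_antisym)
qed

lemma poly_phi_1: "poly (phi n) 1 = of_nat n"
  by (simp add: phi_def poly_sum poly_monom)

lemma Lev_phi: "Lev q (phi n) x = trace q n x"
  by (simp add: phi_def Lev_sum Lev_monom trace_def)

lemma poly_trace_poly: "poly (trace_poly q n) x = trace q n x"
  by (simp add: trace_poly_def trace_def poly_sum poly_monom)

context fqs
begin

lemma coeffs_in_add: "coeffs_in (Fq q) u \<Longrightarrow> coeffs_in (Fq q) v \<Longrightarrow> coeffs_in (Fq q) (u + v :: 'a poly)"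
  by (simp add: coeffs_in_def Fq_add)
lemma coeffs_in_diff: "coeffs_in (Fq q) u \<Longrightarrow> coeffs_in (Fq q) v \<Longrightarrow> coeffs_in (Fq q) (u - v :: 'a poly)"
  by (simp add: coeffs_in_def Fq_diff)
lemma coeffs_in_minus: "coeffs_in (Fq q) u \<Longrightarrow> coeffs_in (Fq q) (- u :: 'a poly)"
  by (simp add: coeffs_in_def Fq_neg)
lemma coeffs_in_mult: "coeffs_in (Fq q) u \<Longrightarrow> coeffs_in (Fq q) v \<Longrightarrow> coeffs_in (Fq q) (u * v :: 'a poly)"
  unfolding coeffs_in_def coeff_mult by (intro allI Fq_sum Fq_mult) auto
lemma coeffs_in_1: "coeffs_in (Fq q) (1 :: 'a poly)"
  by (simp add: coeffs_in_def coeff_1 Fq_0 Fq_1)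
lemma coeffs_in_0: "coeffs_in (Fq q) (0 :: 'a poly)"
  by (simp add: coeffs_in_def Fq_0)
lemma coeffs_in_monom: "c \<in> Fq q \<Longrightarrow> coeffs_in (Fq q) (monom c k :: 'a poly)"
  by (simp add: coeffs_in_def Fq_0)
lemma coeffs_in_pCons: "coeffs_in (Fq q) (pCons a u :: 'a poly) \<longleftrightarrow> a \<in> Fq q \<and> coeffs_in (Fq q) u"
  unfolding coeffs_in_def by (auto simp: coeff_pCons split: nat.splits)
lemma coeffs_in_phi: "coeffs_in (Fq q) (phi k :: 'a poly)"
  by (simp add: coeffs_in_def coeff_phi Fq_0 Fq_1)
lemma coeffs_in_const: "c \<in> Fq q \<Longrightarrow> coeffs_in (Fq q) ([:c:] :: 'a poly)"
  by (simp add: coeffs_in_pCons coeffs_in_0)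

lemma Lev_pCons:
  assumes "coeffs_in (Fq q) u"
  shows "Lev q (pCons a u) (x::'a) = a * x + (Lev q u x) ^ q"
proof -
  have "Lev q (pCons a u) x = (\<Sum>i\<le>Suc (degree u). coeff (pCons a u) i * x ^ (q ^ i))"
    by (rule Lev_bound) (rule degree_pCons_le)
  also have "\<dots> = a * x + (\<Sum>i\<le>degree u. coeff u i * x ^ (q ^ Suc i))"
    by (subst sum.atMost_Suc_shift) simp
  also have "(\<Sum>i\<le>degree u. coeff u i * x ^ (q ^ Suc i)) = (Lev q u x) ^ q"
  proof -
    have "(Lev q u x) ^ q = (Lev q u x) ^ (q ^ 1)" by simp
    also have "\<dots> = (\<Sum>i\<le>degree u. (coeff u i * x ^ (q ^ i)) ^ (q ^ 1))"
      unfolding Lev_def by (rule frob_sum)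
    also have "\<dots> = (\<Sum>i\<le>degree u. coeff u i * x ^ (q ^ Suc i))"
    proof (rule sum.cong)
      fix i assume "i \<in> {..degree u}"
      have "coeff u i ^ q = coeff u i" using assms by (simp add: coeffs_in_def Fq_def)
      thus "(coeff u i * x ^ (q ^ i)) ^ (q ^ 1) = coeff u i * x ^ (q ^ Suc i)"
        by (simp add: power_mult_distrib flip: power_mult) (simp add: mult.commute)
    qed simp
    finally show ?thesis by simp
  qed
  finally show ?thesis .
qed

lemma Lev_mult:
  assumes "coeffs_in (Fq q) u" "coeffs_in (Fq q) v"
  shows "Lev q (u * v) (x::'a) = Lev q u (Lev q v x)"
  using assms(1)
proof (induction u rule: pCons_induct)
  case 0 then show ?case by simp
next
  case (pCons a u)
  have u: "coeffs_in (Fq q) u" "a \<in> Fq q" using pCons.prems by (simp_all add: coeffs_in_pCons)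
  have "Lev q (pCons a u * v) x = Lev q (smult a v + pCons 0 (u * v)) x" by simp
  also have "\<dots> = a * Lev q v x + (Lev q (u * v) x) ^ q"
    by (simp add: Lev_add Lev_smult Lev_pCons coeffs_in_mult u assms(2))
  also have "\<dots> = Lev q (pCons a u) (Lev q v x)"
    using pCons.IH[OF u(1)] by (simp add: Lev_pCons u)
  finally show ?case .
qed

lemma Lev_xadd: "Lev q u ((x::'a) + y) = Lev q u x + Lev q u y"
  by (simp add: Lev_def frob_add sum.distrib distrib_left)

lemma Lev_xsmult: "c \<in> Fq q \<Longrightarrow> Lev q u ((c::'a) * x) = c * Lev q u x"
  by (simp add: Lev_def power_mult_distrib Fq_pow sum_distrib_left mult_ac)

lemma Lev_x0: "Lev q u (0::'a) = 0"
proof -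
  have z: "\<And>i. (0::'a) ^ (q ^ i) = 0" using q2 by simp
  show ?thesis unfolding Lev_def z by simp
qed

lemma Lev_xminus: "Lev q u (-(x::'a)) = - Lev q u x"
  by (simp add: Lev_def frob_neg sum_negf)

lemma Lev_xdiff: "Lev q u ((x::'a) - y) = Lev q u x - Lev q u y"
  using Lev_xadd[of u x "-y"] Lev_xminus[of u y] by simp

lemma Lev_Fq: "t \<in> Fq q \<Longrightarrow> Lev q u (t::'a) = poly u 1 * t"
  by (simp add: Lev_def Fq_pow poly_altdef sum_distrib_right)

lemma Lev_xn1: "Lev q (monom 1 n - 1) (x::'a) = 0"
proof -
  have "Lev q (monom 1 n - 1) x = x ^ (q ^ n) - x"
    by (simp add: Lev_diff Lev_monom flip: monom_0 monom_eq_1)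
  thus ?thesis by (simp add: pow_card)
qed

end

context fqs
begin

lemma coeff_frobp: "coeff (frobp q u) i = (coeff u i :: 'a) ^ q"
  using q2 by (simp add: frobp_def coeff_map_poly)

lemma frobp_id: "coeffs_in (Fq q) (u::'a poly) \<longleftrightarrow> frobp q u = u"
  by (simp add: poly_eq_iff coeff_frobp coeffs_in_def Fq_def)

lemma frobp_mult: "frobp q (u * v) = frobp q u * frobp q (v::'a poly)"
proof (rule poly_eqI)
  fix k
  have "coeff (frobp q (u * v)) k = (\<Sum>i\<le>k. coeff u i * coeff v (k - i)) ^ (q ^ 1)"
    by (simp add: coeff_frobp coeff_mult)
  also have "\<dots> = (\<Sum>i\<le>k. (coeff u i * coeff v (k - i)) ^ (q ^ 1))" by (rule frob_sum)
  also have "\<dots> = coeff (frobp q u * frobp q v) k"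
    by (simp add: coeff_frobp coeff_mult power_mult_distrib)
  finally show "coeff (frobp q (u * v)) k = coeff (frobp q u * frobp q v) k" .
qed

lemma frobp_add: "frobp q (u + v) = frobp q u + frobp q (v::'a poly)"
  by (rule poly_eqI) (simp add: coeff_frobp frob_add[of _ _ 1, simplified])

lemma frobp_0: "frobp q (0::'a poly) = 0"
  by (simp add: frobp_def)

lemma degree_frobp: "degree (frobp q (u::'a poly)) = degree u"
  unfolding frobp_def using q2 by (intro degree_map_poly) simp

lemma frobp_eq_0: "frobp q (u::'a poly) = 0 \<longleftrightarrow> u = 0"
proof
  assume "frobp q u = 0"
  hence "coeff (frobp q u) (degree u) = 0" by simp
  hence "lead_coeff u ^ q = 0" by (simp add: coeff_frobp)
  thus "u = 0" by simp
qed (simp add: frobp_0)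

lemma div_mod_Fq:
  assumes "coeffs_in (Fq q) (x::'a poly)" "coeffs_in (Fq q) y"
  shows "coeffs_in (Fq q) (x div y) \<and> coeffs_in (Fq q) (x mod y)"
proof -
  have fx: "frobp q x = x" and fy: "frobp q y = y" using assms frobp_id by auto
  have "(x div y, x mod y) = (frobp q (x div y), frobp q (x mod y))"
  proof (induction rule: euclidean_relation_polyI)
    case by0
    then show ?case using fx by (simp add: frobp_0)
  next
    case divides
    hence "x mod y = 0" by simp
    moreover have "x = frobp q (x div y) * y"
    proof -
      have "x = frobp q (x div y * y + x mod y)" by (simp add: fx)
      also have "\<dots> = frobp q (x div y) * y" by (simp only: frobp_add frobp_mult fy \<open>x mod y = 0\<close> frobp_0 add_0_right)
      finally show ?thesis .
    qed
    ultimately show ?case by (simp add: frobp_0)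
  next
    case euclidean_relation
    hence "degree (x mod y) < degree y" by (intro degree_mod_less_degree) auto
    moreover have "x = frobp q (x div y) * y + frobp q (x mod y)"
    proof -
      have "x = frobp q (x div y * y + x mod y)" by (simp add: fx)
      also have "\<dots> = frobp q (x div y) * y + frobp q (x mod y)" by (simp only: frobp_add frobp_mult fy)
      finally show ?thesis .
    qed
    ultimately show ?case by (simp add: degree_frobp)
  qed
  thus ?thesis by (simp add: frobp_id)
qed

lemma exact_div_Fq:
  assumes "coeffs_in (Fq q) (x::'a poly)" "coeffs_in (Fq q) y" "y dvd x"
  obtains c where "coeffs_in (Fq q) c" "x = y * c"
proof -
  have "x = y * (x div y)" using assms(3) by simp
  thus ?thesis using that div_mod_Fq[OF assms(1,2)] by blast
qed

lemma ideal_lemma: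
  assumes "coeffs_in (Fq q) (h::'a poly)" "coeffs_in (Fq q) g" "g \<noteq> 0"
  shows "\<exists>d a b. coeffs_in (Fq q) d \<and> coeffs_in (Fq q) a \<and> coeffs_in (Fq q) b \<and> d \<noteq> 0 \<and>
           d = a * h + b * g \<and> d dvd h \<and> d dvd g"
proof -
  define S where "S = {e. e \<noteq> 0 \<and> (\<exists>a b. coeffs_in (Fq q) a \<and> coeffs_in (Fq q) b \<and> e = a * h + b * g)}"
  have "g = 0 * h + 1 * g" by simp
  hence "g \<in> S" unfolding S_def using assms coeffs_in_0 coeffs_in_1 by blast
  define k where "k = (LEAST k. \<exists>e\<in>S. degree e = k)"
  have "\<exists>e\<in>S. degree e = k" unfolding k_def by (rule LeastI_ex) (use \<open>g \<in> S\<close> in blast)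
  then obtain d where dS: "d \<in> S" and dk: "degree d = k" by blast
  have minimal: "degree d \<le> degree e" if "e \<in> S" for e
    unfolding dk k_def by (rule Least_le) (use that in blast)
  from dS obtain a b where ab: "coeffs_in (Fq q) a" "coeffs_in (Fq q) b" "d = a * h + b * g" "d \<noteq> 0"
    unfolding S_def by blast
  have dF: "coeffs_in (Fq q) d" using ab by (simp add: coeffs_in_add coeffs_in_mult assms)
  have divides: "d dvd x" if x: "coeffs_in (Fq q) x" "\<exists>a b. coeffs_in (Fq q) a \<and> coeffs_in (Fq q) b \<and> x = a * h + b * g" for x
  proof (rule ccontr)
    assume nd: "\<not> d dvd x"
    from x obtain a' b' where ab': "coeffs_in (Fq q) a'" "coeffs_in (Fq q) b'" "x = a' * h + b' * g" by blast
    have F: "coeffs_in (Fq q) (x div d)" "coeffs_in (Fq q) (x mod d)" using div_mod_Fq[OF x(1) dF] by auto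
    have "x mod d = x - (x div d) * d" by (simp add: minus_div_mult_eq_mod)
    also have "\<dots> = (a' - (x div d) * a) * h + (b' - (x div d) * b) * g"
      using ab ab' by (simp add: algebra_simps)
    finally have eq: "x mod d = (a' - (x div d) * a) * h + (b' - (x div d) * b) * g" .
    have "x mod d \<noteq> 0" using nd by auto
    moreover have "coeffs_in (Fq q) (a' - (x div d) * a)" "coeffs_in (Fq q) (b' - (x div d) * b)"
      using F ab ab' by (intro coeffs_in_diff coeffs_in_mult; simp)+
    ultimately have "x mod d \<in> S" unfolding S_def using eq by blast
    hence "degree d \<le> degree (x mod d)" by (rule minimal)
    moreover have "degree (x mod d) < degree d" using nd ab(4) by (intro degree_mod_less_degree)
    ultimately show False by simp
  qed
  have "h = 1 * h + 0 * g" "g = 0 * h + 1 * g" by simp_all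
  hence "d dvd h" "d dvd g" using assms coeffs_in_0 coeffs_in_1 by (blast intro: divides)+
  thus ?thesis using ab dF by blast
qed

lemma coeffs_in_smult: "c \<in> Fq q \<Longrightarrow> coeffs_in (Fq q) u \<Longrightarrow> coeffs_in (Fq q) (smult c (u::'a poly))"
  by (simp add: coeffs_in_def Fq_mult)

lemma bezout_coprime:
  assumes "a * h + b * g = (1::'a poly)"
  shows "coprime h g"
proof (rule coprimeI)
  fix c assume "c dvd h" "c dvd g"
  hence "c dvd a * h + b * g" by simp
  thus "is_unit c" using assms by simp
qed

lemma coprime_bezout:
  assumes "coeffs_in (Fq q) (h::'a poly)" "coeffs_in (Fq q) g" "g \<noteq> 0" "coprime h g"
  obtains a b where "coeffs_in (Fq q) a" "coeffs_in (Fq q) b" "a * h + b * g = 1"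
proof -
  obtain d a b where d: "coeffs_in (Fq q) d" "coeffs_in (Fq q) a" "coeffs_in (Fq q) b" "d \<noteq> 0"
           "d = a * h + b * g" "d dvd h" "d dvd g"
    using ideal_lemma[OF assms(1-3)] by blast
  have "is_unit d" using coprime_common_divisor[OF assms(4) d(6,7)] .
  then obtain c where c0: "d = [:c:]" "c dvd 1" by (auto simp: is_unit_poly_iff)
  hence c: "d = [:c:]" "c \<noteq> 0" by auto
  have cF: "c \<in> Fq q" using d(1) c(1) unfolding coeffs_in_def by (metis coeff_pCons_0)
  have "smult (inverse c) a * h + smult (inverse c) b * g = smult (inverse c) d"
    using d(5) by (simp add: smult_add_right)
  also have "\<dots> = 1" using c by simp
  finally show ?thesis using that d(2,3) cF
    using coeffs_in_smult[OF Fq_inv[OF cF]] by blast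
qed

lemma not_coprime_divisor:
  assumes "coeffs_in (Fq q) (h::'a poly)" "coeffs_in (Fq q) g" "g \<noteq> 0" "\<not> coprime h g"
  obtains d where "coeffs_in (Fq q) d" "d \<noteq> 0" "degree d \<ge> 1" "d dvd h" "d dvd g"
proof -
  obtain d a b where d: "coeffs_in (Fq q) d" "coeffs_in (Fq q) a" "coeffs_in (Fq q) b" "d \<noteq> 0"
           "d = a * h + b * g" "d dvd h" "d dvd g"
    using ideal_lemma[OF assms(1-3)] by blast
  have "degree d \<ge> 1"
  proof (rule ccontr)
    assume "\<not> degree d \<ge> 1"
    hence "degree d = 0" by simp
    then have c: "d = [:coeff d 0:]" using degree_0_id[of d] by simp
    define c where "c = coeff d 0"
    have c: "d = [:c:]" using c c_def by simp
    hence "c \<noteq> 0" using d(4) by simp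
    have "smult (inverse c) a * h + smult (inverse c) b * g = smult (inverse c) d"
      using d(5) by (simp add: smult_add_right)
    also have "\<dots> = 1" using c \<open>c \<noteq> 0\<close> by simp
    finally have "coprime h g" by (rule bezout_coprime)
    thus False using assms(4) by simp
  qed
  thus ?thesis using that d by blast
qed

lemma inv_mod_unique:
  assumes "a * h + b * g = (1::'a poly)" "g \<noteq> 0"
    and H1: "\<forall>i\<ge>degree g. coeff H1 i = 0" "g dvd h * H1 - 1"
    and H2: "\<forall>i\<ge>degree g. coeff H2 i = 0" "g dvd h * H2 - 1"
  shows "H1 = H2"
proof (rule ccontr)
  assume ne: "H1 \<noteq> H2"
  have "g dvd (h * H1 - 1) - (h * H2 - 1)" using H1(2) H2(2) by (rule dvd_diff)
  hence gd: "g dvd h * (H1 - H2)" by (simp add: algebra_simps)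
  have "H1 - H2 = (a * h + b * g) * (H1 - H2)" using assms(1) by simp
  also have "\<dots> = a * (h * (H1 - H2)) + g * (b * (H1 - H2))" by (simp add: algebra_simps)
  finally have eqn: "H1 - H2 = a * (h * (H1 - H2)) + g * (b * (H1 - H2))" .
  have "g dvd H1 - H2" by (subst eqn) (rule dvd_add[OF dvd_mult[OF gd] dvd_triv_left])
  hence dg: "degree g \<le> degree (H1 - H2)" using ne by (intro dvd_imp_degree_le) auto
  have "coeff H1 (degree (H1 - H2)) = 0" "coeff H2 (degree (H1 - H2)) = 0"
    using H1(1) H2(1) dg by auto
  hence "coeff (H1 - H2) (degree (H1 - H2)) = 0" by simp
  hence "H1 - H2 = 0" by (simp only: leading_coeff_0_iff)
  thus False using ne by simp
qed

lemma inv_mod_exists: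
  assumes "a * h + b * g = (1::'a poly)" "g \<noteq> 0"
    "coeffs_in (Fq q) a" "coeffs_in (Fq q) b" "coeffs_in (Fq q) g"
  shows "\<exists>!H. coeffs_in (Fq q) H \<and> (\<forall>i\<ge>degree g. coeff H i = 0) \<and> g dvd h * H - 1"
proof (rule ex_ex1I)
  let ?H = "a mod g"
  have "coeffs_in (Fq q) ?H" using div_mod_Fq[OF assms(3,5)] by simp
  moreover have "\<forall>i\<ge>degree g. coeff ?H i = 0"
  proof (intro allI impI)
    fix i assume "i \<ge> degree g"
    show "coeff ?H i = 0"
    proof (cases "g dvd a")
      case True thus ?thesis by simp
    next
      case False
      hence "degree ?H < degree g" using assms(2) by (intro degree_mod_less_degree)
      thus ?thesis using \<open>i \<ge> degree g\<close> by (intro coeff_eq_0) simp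
    qed
  qed
  moreover have "g dvd h * ?H - 1"
  proof -
    have "h * ?H - 1 = h * (a - (a div g) * g) - (a * h + b * g)"
      using assms(1) by (simp add: minus_div_mult_eq_mod)
    also have "\<dots> = g * (- (h * (a div g)) - b)" by (simp add: algebra_simps)
    finally show ?thesis by simp
  qed
  ultimately show "\<exists>H. coeffs_in (Fq q) H \<and> (\<forall>i\<ge>degree g. coeff H i = 0) \<and> g dvd h * H - 1" by blast
next
  fix H1 H2 assume "coeffs_in (Fq q) H1 \<and> (\<forall>i\<ge>degree g. coeff H1 i = 0) \<and> g dvd h * H1 - 1"
     "coeffs_in (Fq q) H2 \<and> (\<forall>i\<ge>degree g. coeff H2 i = 0) \<and> g dvd h * H2 - 1"
  thus "H1 = H2" using inv_mod_unique[OF assms(1,2)] by blast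
qed

end

context fqs
begin

lemma trace_Fq: "trace q n (x::'a) \<in> Fq q"
proof -
  define f where "f i = x ^ (q ^ i)" for i
  have "(trace q n x) ^ q = (\<Sum>i<n. f i) ^ (q ^ 1)" by (simp add: trace_def f_def)
  also have "\<dots> = (\<Sum>i<n. f i ^ (q ^ 1))" by (rule frob_sum)
  also have "\<dots> = (\<Sum>i<n. f (Suc i))"
    by (rule sum.cong) (simp_all add: f_def power_Suc2 mult.commute flip: power_mult)
  also have "\<dots> = (\<Sum>i<n. f i)"
  proof -
    have "f 0 + (\<Sum>i<n. f (Suc i)) = (\<Sum>i<n. f i) + f n"
      by (simp only: sum.lessThan_Suc_shift[symmetric] sum.lessThan_Suc)
    moreover have "f n = f 0" by (simp add: f_def pow_card)
    ultimately show ?thesis by simp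
  qed
  finally show ?thesis by (simp add: Fq_def trace_def f_def)
qed

lemma trace_Lev_phi: "trace q n (x::'a) = Lev q (phi n) x" by (simp add: Lev_phi)

lemma trace_Lev:
  assumes "coeffs_in (Fq q) u"
  shows "trace q n (Lev q u (x::'a)) = poly u 1 * trace q n x"
proof -
  have "trace q n (Lev q u x) = Lev q (phi n * u) x"
    by (simp add: trace_Lev_phi Lev_mult coeffs_in_phi assms)
  also have "\<dots> = Lev q (u * phi n) x" by (simp add: mult.commute)
  also have "\<dots> = Lev q u (trace q n x)"
    by (simp add: trace_Lev_phi Lev_mult coeffs_in_phi assms)
  also have "\<dots> = poly u 1 * trace q n x" by (rule Lev_Fq[OF trace_Fq])
  finally show ?thesis .
qed

lemma trace_add: "trace q n ((x::'a) + y) = trace q n x + trace q n y"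
  by (simp add: trace_Lev_phi Lev_xadd)
lemma trace_smult: "c \<in> Fq q \<Longrightarrow> trace q n ((c::'a) * x) = c * trace q n x"
  by (simp add: trace_Lev_phi Lev_xsmult)
lemma trace_0: "trace q n (0::'a) = 0"
  by (simp add: trace_Lev_phi Lev_x0)
lemma trace_diff: "trace q n ((x::'a) - y) = trace q n x - trace q n y"
  by (simp add: trace_Lev_phi Lev_xdiff)
lemma trace_sum: "trace q n (\<Sum>i\<in>A. (f i::'a)) = (\<Sum>i\<in>A. trace q n (f i))"
  by (induction A rule: infinite_finite_induct) (simp_all add: trace_0 trace_add)

lemma poly_Tn:
  assumes "t \<in> Fq q"
  shows "poly (Tn q n f) (t::'a) = trace q n (poly f t)"
proof -
  have "poly (Tn q n f) t = (\<Sum>i\<le>degree f. trace q n (coeff f i) * t ^ i)"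
    by (simp add: Tn_def poly_sum poly_monom)
  also have "\<dots> = (\<Sum>i\<le>degree f. trace q n (t ^ i * coeff f i))"
  proof (rule sum.cong[OF refl])
    fix i
    have e: "trace q n (t ^ i * coeff f i) = t ^ i * trace q n (coeff f i)"
      by (rule trace_smult[OF Fq_pow2[OF assms]])
    show "trace q n (coeff f i) * t ^ i = trace q n (t ^ i * coeff f i)"
      by (simp only: e mult.commute[of "trace q n (coeff f i)"])
  qed
  also have "\<dots> = trace q n (poly f t)"
    by (simp add: poly_altdef trace_sum mult.commute)
  finally show ?thesis .
qed

lemma Lev_1: "Lev q 1 (x::'a) = x"
  using Lev_monom[of q 1 0 x] by simp

lemma nonvanish:
  assumes "u \<noteq> 0" "degree u < n"
  shows "\<exists>z. Lev q u (z::'a) \<noteq> 0"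
proof (rule ccontr)
  assume "\<not> ?thesis"
  hence all0: "\<forall>z. poly (lin_assoc q u) (z::'a) = 0" by (simp add: poly_lin_assoc)
  define d where "d = degree u"
  have inj: "q ^ i = q ^ d \<longleftrightarrow> i = d" for i using q2 by (simp add: power_inject_exp)
  have "coeff (lin_assoc q u) (q ^ d) = (\<Sum>i\<le>d. if i = d then coeff u i else 0)"
    unfolding lin_assoc_def coeff_sum d_def by (rule sum.cong) (auto simp: inj[unfolded d_def])
  also have "\<dots> = lead_coeff u" by (simp add: d_def)
  finally have "coeff (lin_assoc q u) (q ^ d) \<noteq> 0" using assms by simp
  hence nz: "lin_assoc q u \<noteq> (0::'a poly)" by auto
  have "degree (lin_assoc q u) \<le> q ^ d"
    unfolding lin_assoc_def d_def
  proof (rule degree_sum_le)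
    fix i assume "i \<in> {..degree u}"
    hence "q ^ i \<le> q ^ degree u" using q2 by (intro power_increasing) auto
    thus "degree (monom (coeff u i) (q ^ i) :: 'a poly) \<le> q ^ degree u"
      using degree_monom_le order_trans by blast
  qed simp
  also have "q ^ d < q ^ n" using q2 assms(2) d_def by (intro power_strict_increasing) auto
  finally have "degree (lin_assoc q u) < card (UNIV::'a set)" by (simp add: card)
  moreover have "card {x. poly (lin_assoc q u) (x::'a) = 0} \<le> degree (lin_assoc q u)"
    by (rule card_poly_roots_bound[OF nz])
  moreover have "{x. poly (lin_assoc q u) (x::'a) = 0} = UNIV" using all0 by auto
  ultimately show False by simp
qed

lemma xn1_props: "coeffs_in (Fq q) (monom 1 n - 1 :: 'a poly)" "(monom 1 n - 1 :: 'a poly) \<noteq> 0"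
  "degree (monom 1 n - 1 :: 'a poly) = n"
proof -
  show "coeffs_in (Fq q) (monom 1 n - 1 :: 'a poly)"
    by (intro coeffs_in_diff coeffs_in_monom coeffs_in_1 Fq_1)
  have c: "coeff (monom 1 n - 1 :: 'a poly) n = 1" using n by simp
  thus "(monom 1 n - 1 :: 'a poly) \<noteq> 0" by (metis coeff_0 one_neq_zero)
  have "degree (monom 1 n - 1 :: 'a poly) \<le> n"
    by (rule degree_le) (use n in auto)
  moreover have "n \<le> degree (monom 1 n - 1 :: 'a poly)" using c by (intro le_degree) simp
  ultimately show "degree (monom 1 n - 1 :: 'a poly) = n" by simp
qed

lemma kernel_trivial:
  assumes "coeffs_in (Fq q) h" "coprime h (phi n :: 'a poly)"
    and "trace q n z = 0" "Lev q h (z::'a) = 0"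
  shows "z = 0"
proof -
  obtain a b where ab: "coeffs_in (Fq q) a" "coeffs_in (Fq q) b" "a * h + b * phi n = 1"
    using coprime_bezout[OF assms(1) coeffs_in_phi phi_nz[OF n] assms(2)] by blast
  have "z = Lev q (a * h + b * phi n) z" using ab(3) by (simp add: Lev_1)
  also have "\<dots> = Lev q a (Lev q h z) + Lev q b (trace q n z)"
    by (simp add: Lev_add Lev_mult ab(1,2) assms(1) coeffs_in_phi Lev_phi)
  also have "\<dots> = 0" using assms(3,4) by (simp add: Lev_x0)
  finally show ?thesis .
qed

lemma kernel_nontrivial:
  assumes "coeffs_in (Fq q) h" "\<not> coprime h (phi n :: 'a poly)"
  shows "\<exists>z::'a. z \<noteq> 0 \<and> trace q n z = 0 \<and> Lev q h z = 0"
proof -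
  obtain d where d: "coeffs_in (Fq q) d" "d \<noteq> 0" "degree d \<ge> 1" "d dvd h" "d dvd phi n"
    using not_coprime_divisor[OF assms(1) coeffs_in_phi phi_nz[OF n] assms(2)] by blast
  have "d dvd (monom 1 n - 1 :: 'a poly)" unfolding xn1_eq using d(5) by (rule dvd_mult)
  then obtain w where w: "coeffs_in (Fq q) w" "monom 1 n - 1 = d * w"
    using exact_div_Fq[OF xn1_props(1) d(1)] by blast
  have "w \<noteq> 0" using w(2) xn1_props(2) by auto
  hence "degree (monom 1 n - 1 :: 'a poly) = degree d + degree w"
    using w(2) d(2) by (simp add: degree_mult_eq)
  hence "degree w < n" using xn1_props(3) d(3) by simp
  then obtain y where y: "Lev q w (y::'a) \<noteq> 0" using nonvanish \<open>w \<noteq> 0\<close> by blast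
  define z where "z = Lev q w y"
  have Ldz: "Lev q d z = 0"
  proof -
    have "Lev q d z = Lev q (d * w) y" by (simp add: z_def Lev_mult d(1) w(1))
    also have "\<dots> = 0" by (simp flip: w(2) add: Lev_xn1)
    finally show ?thesis .
  qed
  obtain h' where h': "coeffs_in (Fq q) h'" "h = d * h'"
    using exact_div_Fq[OF assms(1) d(1) d(4)] by blast
  obtain f' where f': "coeffs_in (Fq q) f'" "phi n = d * f'"
    using exact_div_Fq[OF coeffs_in_phi d(1) d(5)] by blast
  have "Lev q h z = Lev q (h' * d) z" by (simp add: h'(2) mult.commute)
  also have "\<dots> = 0" by (simp add: Lev_mult h'(1) d(1) Ldz Lev_x0)
  finally have 1: "Lev q h z = 0" .
  have "trace q n z = Lev q (f' * d) z" by (simp add: trace_Lev_phi f'(2) mult.commute)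
  also have "\<dots> = 0" by (simp add: Lev_mult f'(1) d(1) Ldz Lev_x0)
  finally have 2: "trace q n z = 0" .
  show ?thesis using 1 2 y z_def by blast
qed

end

context fqs
begin

lemma eval_xq:
  assumes "(monom 1 q - [:0, 1:]) dvd (F - G)" "s \<in> Fq q"
  shows "poly F (s::'a) = poly G s"
proof -
  obtain r where r: "F - G = (monom 1 q - [:0, 1:]) * r" using assms(1) by (elim dvdE)
  have "poly (F - G) s = (s ^ q - s) * poly r s" by (simp add: r poly_monom)
  also have "s ^ q - s = 0" using assms(2) by (simp add: Fq_def)
  finally show ?thesis by simp
qed

lemma poly_Fq: "coeffs_in (Fq q) u \<Longrightarrow> c \<in> Fq q \<Longrightarrow> poly u (c::'a) \<in> Fq q"
  by (simp add: poly_altdef coeffs_in_def Fq_sum Fq_mult Fq_pow2)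

lemma inv_core:
  fixes f k h H F R Q :: "'a poly" and c0 c1 :: 'a
  assumes hF: "coeffs_in (Fq q) h" and HF: "coeffs_in (Fq q) H"
    and kF: "\<forall>c\<in>Fq q. poly k c \<in> Fq q \<and> poly k c \<noteq> 0"
    and LHh: "\<And>x. Lev q H (Lev q h x) = x + c0 * trace q n x"
    and Fs: "\<And>s. s \<in> Fq q \<Longrightarrow> poly F s = - ((poly k (poly R s)) ^ (q - 2) * Lev q H (poly f (poly R s))) + c1 * poly R s"
    and c01: "c0 + c1 = 0"
    and RQ: "\<And>t. t \<in> Fq q \<Longrightarrow> poly R (poly Q t) = t"
    and trP: "\<And>x. trace q n (poly f (trace q n x) + poly k (trace q n x) * Lev q h x) = poly Q (trace q n x)"
  shows "poly F (trace q n (poly f (trace q n x) + poly k (trace q n x) * Lev q h x))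
        + (poly k (poly R (trace q n (poly f (trace q n x) + poly k (trace q n x) * Lev q h x)))) ^ (q - 2)
          * Lev q H (poly f (trace q n x) + poly k (trace q n x) * Lev q h x) = x"
proof -
  define t where "t = trace q n x"
  define y where "y = poly f t + poly k t * Lev q h x"
  define \<kappa> where "\<kappa> = poly k t"
  have tF: "t \<in> Fq q" unfolding t_def by (rule trace_Fq)
  have \<kappa>F: "\<kappa> \<in> Fq q" "\<kappa> \<noteq> 0" using kF tF by (auto simp: \<kappa>_def)
  have s: "trace q n y = poly Q t" unfolding y_def t_def by (rule trP)
  have sF: "poly Q t \<in> Fq q" using s trace_Fq by metis
  have Rs: "poly R (trace q n y) = t" using s RQ[OF tF] by simp
  have kk: "\<kappa> ^ (q - 2) * \<kappa> = 1"
  proof -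
    have qq: "q = (q - 2) + 1 + 1" using q2 by simp
    have "\<kappa> ^ q = \<kappa> ^ (q - 2) * \<kappa> * \<kappa>" by (subst qq) (simp only: power_add power_one_right)
    hence "\<kappa> ^ (q - 2) * \<kappa> * \<kappa> = \<kappa> ^ q" by simp
    also have "\<dots> = \<kappa>" using \<kappa>F by (simp add: Fq_def)
    finally show ?thesis using \<kappa>F(2) by simp
  qed
  have LH: "Lev q H y = Lev q H (poly f t) + \<kappa> * (x + c0 * t)"
  proof -
    have e: "Lev q H (\<kappa> * Lev q h x) = \<kappa> * Lev q H (Lev q h x)" by (rule Lev_xsmult[OF \<kappa>F(1)])
    show ?thesis unfolding y_def using e by (simp add: Lev_xadd LHh t_def \<kappa>_def)
  qed
  have "poly F (trace q n y) + (poly k (poly R (trace q n y))) ^ (q - 2) * Lev q H y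
      = - (\<kappa> ^ (q - 2) * Lev q H (poly f t)) + c1 * t + \<kappa> ^ (q - 2) * (Lev q H (poly f t) + \<kappa> * (x + c0 * t))"
    using Fs[OF trace_Fq[of y]] by (simp add: Rs LH \<kappa>_def)
  also have "\<dots> = (\<kappa> ^ (q - 2) * \<kappa>) * x + (c0 + c1) * t + (\<kappa> ^ (q - 2) * \<kappa> - 1) * c0 * t"
    by (simp add: algebra_simps)
  also have "\<dots> = x" by (simp add: kk c01)
  finally show ?thesis by (simp add: y_def t_def)
qed

end

context fqs
begin

lemma poly_P0:
  "poly (pcompose F (trace_poly q n) + pcompose (pcompose k R) (trace_poly q n) ^ (q - 2) * lin_assoc q H) (y::'a)
   = poly F (trace q n y) + (poly k (poly R (trace q n y))) ^ (q - 2) * Lev q H y"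
  by (simp add: poly_pcompose poly_trace_poly poly_lin_assoc)

lemma coeffs_in_X: "coeffs_in (Fq q) ([:-1, 1:] :: 'a poly)"
  by (simp add: coeffs_in_pCons coeffs_in_0 Fq_neg Fq_1)

lemma finish_inverse:
  fixes P P0 :: "'a poly"
  assumes bP: "bij (poly P)" and left: "\<And>x. poly P0 (poly P x) = x"
  shows "\<forall>x. poly P0 (poly P x) = x \<and> poly P (poly P0 x) = x"
proof (intro allI conjI)
  fix x
  show "poly P0 (poly P x) = x" by (rule left)
  obtain z where z: "poly P z = x" using bP by (metis bij_pointE)
  show "poly P (poly P0 x) = x" using z left by metis
qed

lemma caseI:
  fixes h f k P Q R :: "'a poly"
  assumes hF: "coeffs_in (Fq q) h" and kF: "\<forall>c\<in>Fq q. poly k c \<in> Fq q \<and> poly k c \<noteq> 0"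
    and cop: "coprime h (phi n)" and pn: "p dvd n"
    and polyP: "\<And>x. poly P x = poly f (trace q n x) + poly k (trace q n x) * Lev q h x"
    and bP: "bij (poly P)"
    and trP: "\<And>x. trace q n (poly f (trace q n x) + poly k (trace q n x) * Lev q h x) = poly Q (trace q n x)"
    and RF: "coeffs_in (Fq q) R" and RQ: "\<forall>c\<in>Fq q. poly R (poly Q c) = c \<and> poly Q (poly R c) = c"
  shows "(\<exists>!H. coeffs_in (Fq q) H \<and> (\<forall>i\<ge>n. coeff H i = 0) \<and>
                       (monom 1 n - 1) dvd (h * H - 1)) \<and>
                (\<forall>H F. coeffs_in (Fq q) H \<and> (\<forall>i\<ge>n. coeff H i = 0) \<and>
                       (monom 1 n - 1) dvd (h * H - 1) \<and>
                       (monom 1 q - [:0, 1:]) dvd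
                         (F - (- (pcompose k R ^ (q - 2) *
                                  pcompose (lin_assoc q H) (pcompose f R)))) \<longrightarrow>
                   (let P0 = pcompose F (trace_poly q n) +
                             pcompose (pcompose k R) (trace_poly q n) ^ (q - 2) * lin_assoc q H
                    in \<forall>x. poly P0 (poly P x) = x \<and> poly P (poly P0 x) = x))"
proof -
  let ?X = "[:-1, 1:] :: 'a poly"
  obtain a b where ab: "coeffs_in (Fq q) a" "coeffs_in (Fq q) b" "a * h + b * phi n = 1"
    using coprime_bezout[OF hF coeffs_in_phi phi_nz[OF n] cop] by blast
  define c where "c = poly h 1"
  have cF: "c \<in> Fq q" unfolding c_def by (rule poly_Fq[OF hF Fq_1])
  have c0: "c \<noteq> 0"
  proof
    assume "c = 0"
    hence "?X dvd h" by (simp add: c_def poly_eq_0_iff_dvd[symmetric])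
    moreover have "?X dvd phi n"
      using pn by (simp add: poly_eq_0_iff_dvd[symmetric] poly_phi_1 ofnat_zero_iff)
    ultimately have "is_unit ?X" using cop by (rule coprime_common_divisor[rotated])
    thus False by (auto simp: is_unit_poly_iff)
  qed
  have "?X dvd (h - [:c:])" by (simp add: poly_eq_0_iff_dvd[symmetric] c_def)
  then obtain s' where s': "coeffs_in (Fq q) s'" "h - [:c:] = ?X * s'"
    using exact_div_Fq[OF coeffs_in_diff[OF hF coeffs_in_const[OF cF]] coeffs_in_X] by blast
  define \<alpha> where "\<alpha> = [:inverse c:]"
  define \<beta> where "\<beta> = - ([:inverse c:] * s')"
  have \<alpha>F: "coeffs_in (Fq q) \<alpha>" unfolding \<alpha>_def by (rule coeffs_in_const[OF Fq_inv[OF cF]])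
  have \<beta>F: "coeffs_in (Fq q) \<beta>" unfolding \<beta>_def
    by (intro coeffs_in_minus coeffs_in_mult coeffs_in_const Fq_inv cF s')
  have e1: "\<alpha> * h + \<beta> * ?X = 1"
  proof -
    have "\<alpha> * h + \<beta> * ?X = [:inverse c:] * (h - ?X * s')" by (simp add: \<alpha>_def \<beta>_def algebra_simps smult_add_right smult_diff_right)
    also have "\<dots> = [:inverse c:] * [:c:]" unfolding s'(2)[symmetric] by simp
    also have "\<dots> = 1" using c0 by simp
    finally show ?thesis .
  qed
  have bez: "(a + b * phi n * \<alpha>) * h + (b * \<beta>) * (monom 1 n - 1) = 1"
  proof -
    have "(a + b * phi n * \<alpha>) * h + (b * \<beta>) * (?X * phi n) = a * h + b * phi n * (\<alpha> * h + \<beta> * ?X)"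
      by (simp add: algebra_simps)
    also have "\<dots> = 1" using e1 ab(3) by simp
    finally show ?thesis by (simp add: xn1_eq)
  qed
  have ex1: "\<exists>!H. coeffs_in (Fq q) H \<and> (\<forall>i\<ge>degree (monom 1 n - 1 :: 'a poly). coeff H i = 0) \<and>
                       (monom 1 n - 1) dvd (h * H - 1)"
    by (rule inv_mod_exists[OF bez xn1_props(2)])
       (intro coeffs_in_add coeffs_in_mult ab \<alpha>F \<beta>F coeffs_in_phi, intro coeffs_in_mult ab \<beta>F, rule xn1_props(1))
  have part2: "let P0 = pcompose F (trace_poly q n) +
                             pcompose (pcompose k R) (trace_poly q n) ^ (q - 2) * lin_assoc q H
                    in \<forall>x. poly P0 (poly P x) = x \<and> poly P (poly P0 x) = x"
    if HF: "coeffs_in (Fq q) H" and Hdvd: "(monom 1 n - 1) dvd (h * H - 1)"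
      and Fdvd: "(monom 1 q - [:0, 1:]) dvd (F - (- (pcompose k R ^ (q - 2) * pcompose (lin_assoc q H) (pcompose f R))))"
    for H F
  proof -
    obtain G where G: "coeffs_in (Fq q) G" "h * H - 1 = (monom 1 n - 1) * G"
      using exact_div_Fq[OF coeffs_in_diff[OF coeffs_in_mult[OF hF HF] coeffs_in_1] xn1_props(1) Hdvd] by blast
    have LHh: "Lev q H (Lev q h x) = x + 0 * trace q n x" for x
    proof -
      have "H * h = 1 + G * (monom 1 n - 1)" using G(2) by (simp add: algebra_simps)
      hence "Lev q H (Lev q h x) = Lev q (1 + G * (monom 1 n - 1)) x"
        by (simp flip: Lev_mult[OF HF hF])
      also have "\<dots> = x" by (simp add: Lev_add Lev_1 Lev_mult G(1) xn1_props(1) Lev_xn1 Lev_x0)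
      finally show ?thesis by simp
    qed
    have Fs: "poly F s = - ((poly k (poly R s)) ^ (q - 2) * Lev q H (poly f (poly R s))) + 0 * poly R s"
      if "s \<in> Fq q" for s
      using eval_xq[OF Fdvd that] by (simp add: poly_pcompose poly_lin_assoc)
    have core: "poly F (trace q n (poly f (trace q n x) + poly k (trace q n x) * Lev q h x))
        + (poly k (poly R (trace q n (poly f (trace q n x) + poly k (trace q n x) * Lev q h x)))) ^ (q - 2)
          * Lev q H (poly f (trace q n x) + poly k (trace q n x) * Lev q h x) = x" for x
      by (rule inv_core[OF hF HF kF LHh Fs _ _ trP]) (use RQ in auto)
    show ?thesis unfolding Let_def
      by (rule finish_inverse[OF bP]) (simp add: poly_P0 polyP core poly_pcompose poly_trace_poly poly_lin_assoc)
  qed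
  show ?thesis using ex1 part2 by (simp add: xn1_props(3))
qed

lemma caseII:
  fixes h f k P Q R :: "'a poly"
  assumes hF: "coeffs_in (Fq q) h" and kF: "\<forall>c\<in>Fq q. poly k c \<in> Fq q \<and> poly k c \<noteq> 0"
    and cop: "coprime h (phi n)" and pn: "\<not> p dvd n"
    and polyP: "\<And>x. poly P x = poly f (trace q n x) + poly k (trace q n x) * Lev q h x"
    and bP: "bij (poly P)"
    and trP: "\<And>x. trace q n (poly f (trace q n x) + poly k (trace q n x) * Lev q h x) = poly Q (trace q n x)"
    and RF: "coeffs_in (Fq q) R" and RQ: "\<forall>c\<in>Fq q. poly R (poly Q c) = c \<and> poly Q (poly R c) = c"
  shows "(\<exists>!H. coeffs_in (Fq q) H \<and> (\<forall>i\<ge>n - 1. coeff H i = 0) \<and>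
                       ((monom 1 n - 1) div [:-1, 1:]) dvd (h * H - 1)) \<and>
                (\<forall>H F. coeffs_in (Fq q) H \<and> (\<forall>i\<ge>n - 1. coeff H i = 0) \<and>
                       ((monom 1 n - 1) div [:-1, 1:]) dvd (h * H - 1) \<and>
                       (let M = - (k ^ (q - 2) * pcompose (lin_assoc q H) f) +
                                smult ((1 - poly h 1 * poly H 1) / of_nat n) [:0, 1:]
                        in (monom 1 q - [:0, 1:]) dvd (F - pcompose M R)) \<longrightarrow>
                   (let P0 = pcompose F (trace_poly q n) +
                             pcompose (pcompose k R) (trace_poly q n) ^ (q - 2) * lin_assoc q H
                    in \<forall>x. poly P0 (poly P x) = x \<and> poly P (poly P0 x) = x))"
proof -
  obtain a b where ab: "coeffs_in (Fq q) a" "coeffs_in (Fq q) b" "a * h + b * phi n = 1"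
    using coprime_bezout[OF hF coeffs_in_phi phi_nz[OF n] cop] by blast
  have ex1: "\<exists>!H. coeffs_in (Fq q) H \<and> (\<forall>i\<ge>degree (phi n :: 'a poly). coeff H i = 0) \<and>
                       phi n dvd (h * H - 1)"
    by (rule inv_mod_exists[OF ab(3) phi_nz[OF n] ab(1,2) coeffs_in_phi])
  have nz: "(of_nat n :: 'a) \<noteq> 0" using pn ofnat_zero_iff by simp
  have part2: "let P0 = pcompose F (trace_poly q n) +
                             pcompose (pcompose k R) (trace_poly q n) ^ (q - 2) * lin_assoc q H
                    in \<forall>x. poly P0 (poly P x) = x \<and> poly P (poly P0 x) = x"
    if HF: "coeffs_in (Fq q) H" and Hdvd: "phi n dvd (h * H - 1)"
      and Fdvd: "(monom 1 q - [:0, 1:]) dvd (F - pcompose (- (k ^ (q - 2) * pcompose (lin_assoc q H) f) +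
                                smult ((1 - poly h 1 * poly H 1) / of_nat n) [:0, 1:]) R)"
    for H F
  proof -
    obtain G where G: "coeffs_in (Fq q) G" "h * H - 1 = phi n * G"
      using exact_div_Fq[OF coeffs_in_diff[OF coeffs_in_mult[OF hF HF] coeffs_in_1] coeffs_in_phi Hdvd] by blast
    define c0 where "c0 = poly G 1"
    define c1 where "c1 = (1 - poly h 1 * poly H 1) / (of_nat n :: 'a)"
    have "poly h 1 * poly H 1 - 1 = of_nat n * c0"
      using arg_cong[OF G(2), of "\<lambda>u. poly u 1"] by (simp add: poly_phi_1 c0_def)
    hence c01: "c0 + c1 = 0" using nz unfolding c1_def by (simp add: field_simps)
    have LHh: "Lev q H (Lev q h x) = x + c0 * trace q n x" for x
    proof -
      have "H * h = 1 + G * phi n" using G(2) by (simp add: algebra_simps)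
      hence "Lev q H (Lev q h x) = Lev q (1 + G * phi n) x"
        by (simp flip: Lev_mult[OF HF hF])
      also have "\<dots> = x + Lev q G (trace q n x)"
        by (simp add: Lev_add Lev_1 Lev_mult G(1) coeffs_in_phi Lev_phi)
      also have "\<dots> = x + c0 * trace q n x" by (simp add: Lev_Fq trace_Fq c0_def)
      finally show ?thesis .
    qed
    have Fs: "poly F s = - ((poly k (poly R s)) ^ (q - 2) * Lev q H (poly f (poly R s))) + c1 * poly R s"
      if "s \<in> Fq q" for s
      using eval_xq[OF Fdvd that] by (simp add: poly_pcompose poly_lin_assoc c1_def)
    have core: "poly F (trace q n (poly f (trace q n x) + poly k (trace q n x) * Lev q h x))
        + (poly k (poly R (trace q n (poly f (trace q n x) + poly k (trace q n x) * Lev q h x)))) ^ (q - 2)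
          * Lev q H (poly f (trace q n x) + poly k (trace q n x) * Lev q h x) = x" for x
      by (rule inv_core[OF hF HF kF LHh Fs c01 _ trP]) (use RQ in auto)
    show ?thesis unfolding Let_def
      by (rule finish_inverse[OF bP]) (simp add: poly_P0 polyP core poly_pcompose poly_trace_poly poly_lin_assoc)
  qed
  show ?thesis using ex1 part2 by (simp add: degree_phi[OF n] phi_div Let_def)
qed

end

theorem theorem3p2:
  fixes p q n m :: nat and h f k :: "'a::{field,finite} poly"
  assumes "prime p" and "m > 0" and "q = p ^ m" and "n > 0"
    and "card (UNIV :: 'a set) = q ^ n"
    and "coeffs_in (Fq q) h"
    and "\<forall>c\<in>Fq q. poly k c \<in> Fq q \<and> poly k c \<noteq> 0"
  defines "P \<equiv> pcompose f (trace_poly q n) + pcompose k (trace_poly q n) * lin_assoc q h"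
    and "Q \<equiv> Tn q n f + k * smult (poly h 1) [:0, 1:]"
  shows "(bij (poly P) \<longleftrightarrow>
            coprime h ((monom 1 n - 1) div [:-1, 1:]) \<and>
            bij_betw (poly Q) (Fq q) (Fq q))
       \<and> (bij (poly P) \<longrightarrow>
           (\<forall>R. coeffs_in (Fq q) R \<and>
                (\<forall>c\<in>Fq q. poly R (poly Q c) = c \<and> poly Q (poly R c) = c) \<longrightarrow>
             (p dvd n \<longrightarrow>
                (\<exists>!H. coeffs_in (Fq q) H \<and> (\<forall>i\<ge>n. coeff H i = 0) \<and>
                       (monom 1 n - 1) dvd (h * H - 1)) \<and>
                (\<forall>H F. coeffs_in (Fq q) H \<and> (\<forall>i\<ge>n. coeff H i = 0) \<and>
                       (monom 1 n - 1) dvd (h * H - 1) \<and>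
                       (monom 1 q - [:0, 1:]) dvd
                         (F - (- (pcompose k R ^ (q - 2) *
                                  pcompose (lin_assoc q H) (pcompose f R)))) \<longrightarrow>
                   (let P0 = pcompose F (trace_poly q n) +
                             pcompose (pcompose k R) (trace_poly q n) ^ (q - 2) * lin_assoc q H
                    in \<forall>x. poly P0 (poly P x) = x \<and> poly P (poly P0 x) = x)))
             \<and>
             (\<not> p dvd n \<longrightarrow>
                (\<exists>!H. coeffs_in (Fq q) H \<and> (\<forall>i\<ge>n - 1. coeff H i = 0) \<and>
                       ((monom 1 n - 1) div [:-1, 1:]) dvd (h * H - 1)) \<and>
                (\<forall>H F. coeffs_in (Fq q) H \<and> (\<forall>i\<ge>n - 1. coeff H i = 0) \<and>
                       ((monom 1 n - 1) div [:-1, 1:]) dvd (h * H - 1) \<and>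
                       (let M = - (k ^ (q - 2) * pcompose (lin_assoc q H) f) +
                                smult ((1 - poly h 1 * poly H 1) / of_nat n) [:0, 1:]
                        in (monom 1 q - [:0, 1:]) dvd (F - pcompose M R)) \<longrightarrow>
                   (let P0 = pcompose F (trace_poly q n) +
                             pcompose (pcompose k R) (trace_poly q n) ^ (q - 2) * lin_assoc q H
                    in \<forall>x. poly P0 (poly P x) = x \<and> poly P (poly P0 x) = x)))))"
proof -
  interpret fqs p q n m "TYPE('a)" using assms(1-5) by unfold_locales auto
  note hF = assms(6) and kF = assms(7)
  have polyP: "\<And>x. poly P x = poly f (trace q n x) + poly k (trace q n x) * Lev q h x"
    by (simp add: P_def poly_pcompose poly_trace_poly poly_lin_assoc)
  have polyQ: "\<And>c. poly Q c = poly (Tn q n f) c + poly k c * (poly h 1 * c)"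
    by (simp add: Q_def)
  have h1F: "poly h 1 \<in> Fq q" by (rule poly_Fq[OF hF Fq_1])
  have trP: "trace q n (poly f (trace q n x) + poly k (trace q n x) * Lev q h x) = poly Q (trace q n x)" for x
  proof -
    have tF: "trace q n x \<in> Fq q" by (rule trace_Fq)
    have kt: "poly k (trace q n x) \<in> Fq q" using kF tF by blast
    have "trace q n (poly f (trace q n x) + poly k (trace q n x) * Lev q h x)
        = trace q n (poly f (trace q n x)) + poly k (trace q n x) * trace q n (Lev q h x)"
      by (simp add: trace_add trace_smult[OF kt])
    also have "\<dots> = poly Q (trace q n x)"
      by (simp add: polyQ poly_Tn[OF tF] trace_Lev[OF hF])
    finally show ?thesis .
  qed
  have QF: "poly Q c \<in> Fq q" if "c \<in> Fq q" for c
    using that kF by (simp add: polyQ poly_Tn trace_Fq Fq_add Fq_mult h1F)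
  have trsurj: "\<exists>x. trace q n x = c" if "(c::'a) \<in> Fq q" for c
  proof -
    have "degree (phi n :: 'a poly) < n" using n by (simp add: degree_phi)
    then obtain z where z: "Lev q (phi n) (z::'a) \<noteq> 0" using nonvanish[OF phi_nz[OF n]] by blast
    define \<tau> where "\<tau> = trace q n z"
    have \<tau>: "\<tau> \<noteq> 0" "\<tau> \<in> Fq q" using z by (simp_all add: \<tau>_def Lev_phi trace_Fq)
    have "trace q n ((c / \<tau>) * z) = (c / \<tau>) * trace q n z"
      by (rule trace_smult[OF Fq_div[OF that \<tau>(2)]])
    also have "\<dots> = (c / \<tau>) * \<tau>" by (simp add: \<tau>_def)
    also have "\<dots> = c" using \<tau> by simp
    finally show ?thesis by blast
  qed
  have partA: "bij (poly P) \<longleftrightarrow> coprime h (phi n) \<and> bij_betw (poly Q) (Fq q) (Fq q)"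
  proof
    assume bP: "bij (poly P)"
    have cop: "coprime h (phi n)"
    proof (rule ccontr)
      assume "\<not> coprime h (phi n)"
      then obtain z where z: "z \<noteq> 0" "trace q n z = 0" "Lev q h z = 0"
        using kernel_nontrivial[OF hF] by blast
      have "poly P z = poly P 0" by (simp add: polyP z trace_0 Lev_x0)
      hence "z = 0" using bP by (simp add: bij_def inj_eq)
      thus False using z by simp
    qed
    have img: "poly Q ` Fq q = Fq q"
    proof
      show "poly Q ` Fq q \<subseteq> Fq q" using QF by blast
      show "Fq q \<subseteq> poly Q ` Fq q"
      proof
        fix d :: 'a assume dF: "d \<in> Fq q"
        obtain y where y: "trace q n y = d" using trsurj[OF dF] by blast
        obtain x where x: "poly P x = y" using bP by (metis bij_pointE)
        have "poly Q (trace q n x) = d" using trP[of x] x y polyP by simp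
        thus "d \<in> poly Q ` Fq q" using trace_Fq by blast
      qed
    qed
    have "inj_on (poly Q) (Fq q)" by (rule eq_card_imp_inj_on) (simp_all add: img)
    thus "coprime h (phi n) \<and> bij_betw (poly Q) (Fq q) (Fq q)" using cop img by (simp add: bij_betw_def)
  next
    assume a: "coprime h (phi n) \<and> bij_betw (poly Q) (Fq q) (Fq q)"
    hence cop: "coprime h (phi n)" and injQ: "inj_on (poly Q) (Fq q)" by (auto simp: bij_betw_def)
    have "inj (poly P)"
    proof (rule injI)
      fix x y assume e: "poly P x = poly P y"
      have "poly Q (trace q n x) = poly Q (trace q n y)"
        using arg_cong[OF e, of "trace q n"] by (simp add: polyP trP)
      hence tt: "trace q n x = trace q n y" by (rule inj_onD[OF injQ _ trace_Fq trace_Fq])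
      have k0: "poly k (trace q n x) \<noteq> 0" using kF trace_Fq by blast
      have "poly k (trace q n x) * Lev q h x = poly k (trace q n x) * Lev q h y"
        using e by (simp add: polyP tt)
      hence "Lev q h x = Lev q h y" using k0 by simp
      hence l: "Lev q h (x - y) = 0" by (simp add: Lev_xdiff)
      have t: "trace q n (x - y) = 0" by (simp add: trace_diff tt)
      have "x - y = 0" by (rule kernel_trivial[OF hF cop t l])
      thus "x = y" by simp
    qed
    thus "bij (poly P)" by (simp add: bij_def finite_UNIV_inj_surj)
  qed
  show ?thesis
  proof (rule conjI, goal_cases)
    case 1
    show ?case using partA by (simp add: phi_div)
  next
    case 2
    show ?case
    proof (intro impI allI, goal_cases)
      case (1 R)
      hence bP: "bij (poly P)" and RF: "coeffs_in (Fq q) R"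
        and RQ: "\<forall>c\<in>Fq q. poly R (poly Q c) = c \<and> poly Q (poly R c) = c" by auto
      have cop: "coprime h (phi n)" using partA bP by simp
      show ?case
        using caseI[OF hF kF cop _ polyP bP trP RF RQ] caseII[OF hF kF cop _ polyP bP trP RF RQ]
        by blast
    qed
  qed
qed

end
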